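(* Let $n\ge 2$, let $y_1,\dots,y_n,x_3,\dots,x_n$ be generic complex numbers, and set $x_2=x_1-c$. Then $K_n(\bar x|\bar y)$, with $\bar x=(x_1,x_1-c,x_3,\dots,x_n)$ and $\bar y=(y_1,\dots,y_n)$, regarded as a function of $x_1$, is holomorphic at each of the points $x_1=y_k$, $k=1,\dots,n$.
   Context: Fix a constant $c\neq 0$. Define $g(x,y)=\frac{c}{x-y}$, $h(x,y)=\frac{x-y+c}{c}$, $t(x,y)=\frac{c^2}{(x-y)(x-y+c)}$, and for sets $\bar x,\bar y$, $h(\bar x,\bar y)=\prod_{j,k}h(x_j,y_k)$. For $\#\bar x=\#\bar y=n$, $K_n(\bar x|\bar y)=\Delta'_n(\bar x)\Delta_n(\bar y)h(\bar x,\bar y)\det_{1\le j,k\le n} t(x_j,y_k)$, where $\Delta_n(\bar y)=\prod_{j<k}g(y_j,y_k)$ and $\Delta'_n(\bar x)=\prod_{j>k}g(x_j,x_k)$. *)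

theory Defs
  imports "HOL-Complex_Analysis.Complex_Analysis" "Jordan_Normal_Form.Determinant"
begin

text \<open>Vectors are indexed from 0: x 0, ..., x (n-1) stand for x_1, ..., x_n of the paper.\<close>

definition gfun :: "complex \<Rightarrow> complex \<Rightarrow> complex \<Rightarrow> complex" where
  "gfun c x y = c / (x - y)"

definition hfun :: "complex \<Rightarrow> complex \<Rightarrow> complex \<Rightarrow> complex" where
  "hfun c x y = (x - y + c) / c"

definition tfun :: "complex \<Rightarrow> complex \<Rightarrow> complex \<Rightarrow> complex" where
  "tfun c x y = c^2 / ((x - y) * (x - y + c))"

definition Delta :: "complex \<Rightarrow> nat \<Rightarrow> (nat \<Rightarrow> complex) \<Rightarrow> complex" where
  "Delta c n y = (\<Prod>k<n. \<Prod>j<k. gfun c (y j) (y k))"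

definition Delta' :: "complex \<Rightarrow> nat \<Rightarrow> (nat \<Rightarrow> complex) \<Rightarrow> complex" where
  "Delta' c n x = (\<Prod>j<n. \<Prod>k<j. gfun c (x j) (x k))"

definition hset :: "complex \<Rightarrow> nat \<Rightarrow> (nat \<Rightarrow> complex) \<Rightarrow> (nat \<Rightarrow> complex) \<Rightarrow> complex" where
  "hset c n x y = (\<Prod>j<n. \<Prod>k<n. hfun c (x j) (y k))"

definition Kn :: "complex \<Rightarrow> nat \<Rightarrow> (nat \<Rightarrow> complex) \<Rightarrow> (nat \<Rightarrow> complex) \<Rightarrow> complex" where
  "Kn c n x y = Delta' c n x * Delta c n y * hset c n x y *
     det (mat n n (\<lambda>(j, k). tfun c (x j) (y k)))"

end

theory Submission imports Defs begin

lemma det_scale_col: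
  fixes B :: "nat \<Rightarrow> nat \<Rightarrow> 'a::comm_ring_1"
  assumes k: "k < n"
  shows "det (mat n n (\<lambda>(i,j). if j = k then a * B i j else B i j)) = a * det (mat n n (\<lambda>(i,j). B i j))"
proof -
  let ?M = "mat n n (\<lambda>(i,j). B i j)"
  have M: "?M \<in> carrier_mat n n" by simp
  have "mat n n (\<lambda>(i,j). if j = k then a * B i j else B i j) = transpose_mat (multrow k a (transpose_mat ?M))"
    by (rule eq_matI) auto
  hence "det (mat n n (\<lambda>(i,j). if j = k then a * B i j else B i j)) = det (multrow k a (transpose_mat ?M))"
    using det_transpose[of "multrow k a (transpose_mat ?M)" n] by simp
  also have "\<dots> = a * det (transpose_mat ?M)" by (rule det_multrow[OF k]) simp
  also have "\<dots> = a * det ?M" using det_transpose[OF M] by simp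
  finally show ?thesis .
qed

lemma perm_lt: "p permutes {0..<(n::nat)} \<Longrightarrow> i < n \<Longrightarrow> p i < n"
  using permutes_in_image[of p "{0..<n}" i] by auto

lemma det_analytic:
  assumes "\<And>i j. i < n \<Longrightarrow> j < n \<Longrightarrow> (\<lambda>z. F z i j) analytic_on S"
  shows "(\<lambda>z. det (mat n n (\<lambda>(i,j). F z i j))) analytic_on S"
proof -
  have eq: "(\<lambda>z. det (mat n n (\<lambda>(i,j). F z i j))) = (\<lambda>z. \<Sum> p \<in> {p. p permutes {0 ..< n}}. 
     signof p * (\<Prod> i = 0 ..< n. F z i (p i)))"
    apply (rule ext) apply (subst det_def'[of _ n]) apply simp
    apply (rule sum.cong, simp) apply (rule arg_cong[where f="\<lambda>x. _ * x"])
    apply (rule prod.cong, simp) using perm_lt by fastforce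
  show ?thesis unfolding eq
    apply (intro analytic_intros)
    using assms perm_lt by fastforce
qed

lemma cancel_aux:
  fixes w u v :: complex
  assumes "w \<noteq> 0" shows "w * (u / (v * w)) = u / v" "w * (u / (w * v)) = u / v"
  using assms by (cases "v = 0"; simp add: field_simps)+

lemma gen_pt:
  fixes c :: complex
  assumes "\<forall>m::int. \<bar>m\<bar> \<le> 2 \<longrightarrow> u \<noteq> of_int m * c"
  shows "u \<noteq> 0" "u + c \<noteq> 0" "u - c \<noteq> 0"
proof -
  show "u \<noteq> 0" using assms[rule_format, of 0] by simp
  show "u + c \<noteq> 0" using assms[rule_format, of "-1"] eq_neg_iff_add_eq_0[of u c] by auto
  show "u - c \<noteq> 0" using assms[rule_format, of "1"] by (auto simp: algebra_simps)
qed

theorem propositionA1: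
  fixes c :: complex and n :: nat and x y :: "nat \<Rightarrow> complex"
  assumes c: "c \<noteq> 0"
    and n: "n \<ge> 2"
    and gen_y: "\<forall>k<n. \<forall>l<n. k \<noteq> l \<longrightarrow>
                 (\<forall>m::int. \<bar>m\<bar> \<le> 2 \<longrightarrow> y k - y l \<noteq> of_int m * c)"
    and gen_x: "\<forall>j<n. \<forall>l<n. 2 \<le> j \<longrightarrow> 2 \<le> l \<longrightarrow> j \<noteq> l \<longrightarrow>
                 (\<forall>m::int. \<bar>m\<bar> \<le> 2 \<longrightarrow> x j - x l \<noteq> of_int m * c)"
    and gen_xy: "\<forall>j<n. \<forall>k<n. 2 \<le> j \<longrightarrow>
                 (\<forall>m::int. \<bar>m\<bar> \<le> 2 \<longrightarrow> x j - y k \<noteq> of_int m * c)"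
  shows "\<forall>k<n. \<exists>f. f analytic_on {y k} \<and>
           (\<forall>\<^sub>F z in at (y k). Kn c n (x(0 := z, 1 := z - c)) y = f z)"
proof (intro allI impI)
  fix k assume k: "k < n"
  define a where "a = y k"
  define X where "X z = x(0 := z, 1 := z - c)" for z
  have X0: "X z 0 = z" and X1: "X z 1 = z - c" and X2: "\<And>j. 2 \<le> j \<Longrightarrow> X z j = x j" for z
    by (auto simp: X_def)
  have gy: "a - y l \<noteq> 0" "a - y l + c \<noteq> 0" "a - y l - c \<noteq> 0" if "l < n" "l \<noteq> k" for l
  proof -
    have "\<forall>m::int. \<bar>m\<bar> \<le> 2 \<longrightarrow> y k - y l \<noteq> of_int m * c" using gen_y k that by auto
    from gen_pt[OF this] show "a - y l \<noteq> 0" "a - y l + c \<noteq> 0" "a - y l - c \<noteq> 0" by (simp_all add: a_def)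
  qed
  have gx: "x j - a \<noteq> 0" "x j - a + c \<noteq> 0" if "j < n" "2 \<le> j" for j
  proof -
    have "\<forall>m::int. \<bar>m\<bar> \<le> 2 \<longrightarrow> x j - y k \<noteq> of_int m * c" using gen_xy k that by auto
    from gen_pt[OF this] show "x j - a \<noteq> 0" "x j - a + c \<noteq> 0" by (simp_all add: a_def)
  qed
  define E where "E z i l = (if l = k then (if i = 0 then c^2/(z - a + c) else if i = 1 then c^2/(z - c - a)
      else (z - a) * tfun c (x i) (y l)) else tfun c (X z i) (y l))" for z i l
  define H where "H z = (\<Prod>j<n. \<Prod>l<n. if j = 1 \<and> l = k then 1/c else hfun c (X z j) (y l))" for z
  define f where "f z = Delta' c n (X z) * Delta c n y * H z * det (mat n n (\<lambda>(i,l). E z i l))" for z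
  have anD: "(\<lambda>z. Delta' c n (X z)) analytic_on {a}"
    unfolding Delta'_def
  proof (intro analytic_on_prod)
    fix j i assume j: "j \<in> {..<n}" and i: "i \<in> {..<j}"
    show "(\<lambda>z. gfun c (X z j) (X z i)) analytic_on {a}"
    proof (cases "j = 1")
      case True
      then have "i = 0" using i by auto
      then have "(\<lambda>z. gfun c (X z j) (X z i)) = (\<lambda>z. -1)"
        using True c by (auto simp: X_def gfun_def)
      then show ?thesis by simp
    next
      case False
      then have j2: "2 \<le> j" using i by auto
      show ?thesis
      proof (cases "i < 2")
        case True
        then consider "i = 0" | "i = 1" by linarith
        then show ?thesis
        proof cases
          case 1 then show ?thesis
            using gx[of j] j j2 by (auto simp: gfun_def X_def intro!: analytic_intros)
        next
          case 2 then show ?thesis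
            using gx[of j] j j2 by (auto intro!: analytic_intros simp: gfun_def X_def algebra_simps)
        qed
      next
        case False
        then show ?thesis using j2 by (simp add: gfun_def X_def)
      qed
    qed
  qed
  have anH: "H analytic_on {a}"
  proof -
    have "(\<lambda>z. H z) analytic_on {a}" unfolding H_def
    proof (intro analytic_on_prod)
      fix j l assume j: "j \<in> {..<n}" and l: "l \<in> {..<n}"
      show "(\<lambda>z. if j = 1 \<and> l = k then 1/c else hfun c (X z j) (y l)) analytic_on {a}"
      proof (cases "j = 1 \<and> l = k")
        case True then show ?thesis by simp
      next
        case False
        have "j = 0 \<or> j = 1 \<or> 2 \<le> j" by linarith
        then show ?thesis using False c
          by (auto simp: hfun_def X_def intro!: analytic_intros)
      qed
    qed
    then show ?thesis by simp
  qed
  have anE: "(\<lambda>z. det (mat n n (\<lambda>(i,l). E z i l))) analytic_on {a}"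
  proof (rule det_analytic)
    fix i l assume i: "i < n" and l: "l < n"
    show "(\<lambda>z. E z i l) analytic_on {a}"
    proof (cases "l = k")
      case True
      have "i = 0 \<or> i = 1 \<or> 2 \<le> i" by linarith
      then show ?thesis using True c unfolding E_def
        by (auto intro!: analytic_intros)
    next
      case False
      have g1: "a - y l \<noteq> 0" "a - y l + c \<noteq> 0" "a - c - y l \<noteq> 0" "a - c - y l + c \<noteq> 0"
        using gy[OF l False] by (simp_all add: algebra_simps)
      have "i = 0 \<or> i = 1 \<or> 2 \<le> i" by linarith
      then show ?thesis
      proof (elim disjE)
        assume "i = 0" then show ?thesis using False g1 unfolding E_def tfun_def
          by (auto simp: X_def intro!: analytic_intros)
      next
        assume "i = 1" then show ?thesis using False g1 unfolding E_def tfun_def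
          by (auto simp: X_def intro!: analytic_intros)
      next
        assume "2 \<le> i" then show ?thesis using False unfolding E_def
          by (simp add: X_def)
      qed
    qed
  qed
  have anf: "f analytic_on {a}"
  proof -
    have "(\<lambda>z. Delta' c n (X z) * Delta c n y * H z * det (mat n n (\<lambda>(i,l). E z i l))) analytic_on {a}"
      using anD anH anE by (intro analytic_intros) auto
    then show ?thesis unfolding f_def[abs_def] .
  qed
  have eq: "Kn c n (X z) y = f z" if z: "z \<noteq> a" for z
  proof -
    have za: "z - a \<noteq> 0" using z by simp
    have n1: "1 \<in> {..<n}" and kin: "k \<in> {..<n}" using n k by auto
    have hs: "hset c n (X z) y = (z - a) * H z"
    proof -
      have P1: "hset c n (X z) y = (\<Prod>l<n. hfun c (X z 1) (y l)) *
          (\<Prod>j\<in>{..<n}-{1}. \<Prod>l<n. hfun c (X z j) (y l))"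
        unfolding hset_def by (subst prod.remove[OF _ n1]) auto
      have P2: "(\<Prod>l<n. hfun c (X z 1) (y l)) = hfun c (X z 1) (y k) * (\<Prod>l\<in>{..<n}-{k}. hfun c (X z 1) (y l))"
        by (subst prod.remove[OF _ kin]) auto
      have P3: "hfun c (X z 1) (y k) = (z - a) * (1/c)" by (simp add: hfun_def X_def a_def)
      have Q1: "H z = (\<Prod>l<n. if 1 = (1::nat) \<and> l = k then 1/c else hfun c (X z 1) (y l)) *
          (\<Prod>j\<in>{..<n}-{1}. \<Prod>l<n. if j = 1 \<and> l = k then 1/c else hfun c (X z j) (y l))"
        unfolding H_def by (subst prod.remove[OF _ n1]) auto
      have Q2: "(\<Prod>l<n. if 1 = (1::nat) \<and> l = k then 1/c else hfun c (X z 1) (y l)) =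
          (1/c) * (\<Prod>l\<in>{..<n}-{k}. if 1 = (1::nat) \<and> l = k then 1/c else hfun c (X z 1) (y l))"
        by (subst prod.remove[OF _ kin]) auto
      have Q3: "(\<Prod>l\<in>{..<n}-{k}. if 1 = (1::nat) \<and> l = k then 1/c else hfun c (X z 1) (y l)) =
          (\<Prod>l\<in>{..<n}-{k}. hfun c (X z 1) (y l))" by (rule prod.cong) auto
      have Q4: "(\<Prod>j\<in>{..<n}-{1}. \<Prod>l<n. if j = 1 \<and> l = k then 1/c else hfun c (X z j) (y l)) =
          (\<Prod>j\<in>{..<n}-{1}. \<Prod>l<n. hfun c (X z j) (y l))" by (rule prod.cong) auto
      show ?thesis unfolding P1 P2 P3 Q1 Q2 Q3 Q4 by (simp add: mult_ac)
    qed
    have dt: "det (mat n n (\<lambda>(i,l). E z i l)) = (z - a) * det (mat n n (\<lambda>(i,l). tfun c (X z i) (y l)))"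
    proof -
      have "mat n n (\<lambda>(i,l). E z i l) = mat n n (\<lambda>(i,l). if l = k then (z - a) * tfun c (X z i) (y l) else tfun c (X z i) (y l))"
      proof (rule eq_matI)
        fix i l assume i: "i < dim_row (mat n n (\<lambda>(i,l). if l = k then (z - a) * tfun c (X z i) (y l) else tfun c (X z i) (y l)))"
          and l: "l < dim_col (mat n n (\<lambda>(i,l). if l = k then (z - a) * tfun c (X z i) (y l) else tfun c (X z i) (y l)))"
        have "i = 0 \<or> i = 1 \<or> 2 \<le> i" by linarith
        then have "E z i l = (if l = k then (z - a) * tfun c (X z i) (y l) else tfun c (X z i) (y l))"
        proof (elim disjE)
          assume "i = 0" then show ?thesis unfolding E_def tfun_def
            using cancel_aux(2)[OF za, of "c^2" "z - a + c"] by (simp add: X_def a_def)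
        next
          assume "i = 1"
          moreover have "z - c - y k + c = z - y k" by simp
          ultimately show ?thesis unfolding E_def tfun_def
            using cancel_aux(1)[OF za, of "c^2" "z - c - a"] by (simp add: X_def a_def)
        next
          assume "2 \<le> i" then show ?thesis unfolding E_def by (simp add: X_def)
        qed
        then show "mat n n (\<lambda>(i,l). E z i l) $$ (i, l) = mat n n (\<lambda>(i,l). if l = k then (z - a) * tfun c (X z i) (y l) else tfun c (X z i) (y l)) $$ (i, l)"
          using i l by simp
      qed auto
      then show ?thesis using det_scale_col[OF k, of "z - a" "\<lambda>i l. tfun c (X z i) (y l)"] by simp
    qed
    show ?thesis unfolding Kn_def f_def hs dt by (simp add: mult_ac)
  qed
  have ev: "\<forall>\<^sub>F z in at a. Kn c n (x(0 := z, 1 := z - c)) y = f z"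
    unfolding eventually_at_filter using eq by (auto simp: X_def)
  show "\<exists>f. f analytic_on {y k} \<and> (\<forall>\<^sub>F z in at (y k). Kn c n (x(0 := z, 1 := z - c)) y = f z)"
    using anf ev unfolding a_def by blast
qed

end
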